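(* Let $p>1$, $\alpha\in\mathbb{R}$, and for $\bar w\in\mathbb{R}$, $s$ large, define $$N(\bar w,s)=h(s)|\bar w+1|^{p-1}(\bar w+1)\frac{\ln^\alpha(\psi_1^2(\bar w+1)^2+2)}{\ln^\alpha(\psi_1^2+2)}-h(s)(\bar w+1)-\bar w,$$ with $\psi_1=\psi_1(s)$. Then $$N(\bar w,s)=\frac{p\bar w^2}{2}+O\!\left(\frac{|\bar w|\ln s}{s^2}\right)+O\!\left(\frac{|\bar w|^2}{s}\right)+O(|\bar w|^3)\quad\text{as }(\bar w,s)\to(0,+\infty).$$
   Context: For $T>0$ let $\psi$ be the unique positive solution of $\psi'=\psi^p\ln^\alpha(\psi^2+2)$ with $\psi(t)\to+\infty$ as $t\to T$; set $\psi_1(s)=\psi(T-e^{-s})$ and $h(s)=e^{-s}\psi_1^{p-1}(s)\ln^\alpha(\psi_1^2(s)+2)$. *)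

theory Defs
  imports "HOL-Analysis.Analysis"
begin

definition psi1 :: "(real \<Rightarrow> real) \<Rightarrow> real \<Rightarrow> real \<Rightarrow> real" where
  "psi1 \<psi> T s = \<psi> (T - exp (- s))"

definition hfun :: "(real \<Rightarrow> real) \<Rightarrow> real \<Rightarrow> real \<Rightarrow> real \<Rightarrow> real \<Rightarrow> real" where
  "hfun \<psi> T p \<alpha> s = exp (- s) * psi1 \<psi> T s powr (p - 1)
      * ln ((psi1 \<psi> T s)\<^sup>2 + 2) powr \<alpha>"

definition Nfun :: "(real \<Rightarrow> real) \<Rightarrow> real \<Rightarrow> real \<Rightarrow> real \<Rightarrow> real \<Rightarrow> real \<Rightarrow> real" where
  "Nfun \<psi> T p \<alpha> w s =
     hfun \<psi> T p \<alpha> s * \<bar>w + 1\<bar> powr (p - 1) * (w + 1)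
       * ln ((psi1 \<psi> T s)\<^sup>2 * (w + 1)\<^sup>2 + 2) powr \<alpha> / ln ((psi1 \<psi> T s)\<^sup>2 + 2) powr \<alpha>
     - hfun \<psi> T p \<alpha> s * (w + 1) - w"

end

theory Submission
  imports Defs "HOL-Analysis.Analysis"
begin

lemma exp_quad_bound:
  fixes u :: real assumes "\<bar>u\<bar> \<le> 1"
  shows "\<bar>exp u - 1 - u\<bar> \<le> 2 * u\<^sup>2"
proof (cases "u = 0")
  case True then show ?thesis by simp
next
  case False
  have "\<exists>t. (if u < 0 then u < t \<and> t < 0 else 0 < t \<and> t < u) \<and>
         exp u = (\<Sum>m<2. (\<lambda>n. exp) m 0 / fact m * (u - 0) ^ m) + (\<lambda>n. exp) 2 t / fact 2 * (u - 0) ^ 2"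
    by (rule Taylor[of 2 "\<lambda>n. exp" exp "-1" 1 0 u]) (use assms False in \<open>auto intro: DERIV_exp\<close>)
  then obtain t where t: "\<bar>t\<bar> \<le> 1" and eq: "exp u = 1 + u + exp t / 2 * u^2"
    using assms by (auto simp: eval_nat_numeral split: if_splits)
  have "exp t \<le> exp 1" using t by simp
  also have "exp 1 \<le> (4::real)" using exp_le by simp
  finally have "exp t \<le> 4" .
  then have "\<bar>exp t / 2 * u^2\<bar> \<le> 2 * u^2" by (simp add: abs_mult mult_right_mono)
  then show ?thesis using eq by simp
qed

definition CA :: "real \<Rightarrow> real" where
  "CA p = \<bar>p * (p - 1) * (p - 2)\<bar> * ((4/5) powr (p - 3) + (6/5) powr (p - 3)) / 6"

lemma powr_taylor3:
  fixes w p :: real assumes "\<bar>w\<bar> \<le> 1/5"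
  shows "\<bar>(1 + w) powr p - 1 - p * w - p * (p - 1) / 2 * w\<^sup>2\<bar> \<le> CA p * \<bar>w\<bar> ^ 3"
proof (cases "w = 0")
  case True then show ?thesis by simp
next
  case False
  define D where "D = (\<lambda>m (t::real). (\<Prod>i<m. (p - real i)) * (1 + t) powr (p - real m))"
  have der: "\<forall>m t. m < 3 \<and> -1/5 \<le> t \<and> t \<le> 1/5 \<longrightarrow> (D m has_real_derivative D (Suc m) t) (at t)"
  proof (intro allI impI)
    fix m :: nat and t :: real assume "m < 3 \<and> -1/5 \<le> t \<and> t \<le> 1/5"
    then have pos: "1 + t > 0" by auto
    have d1: "((\<lambda>t. (\<Prod>i<m. (p - real i)) * (1 + t) powr (p - real m)) has_real_derivative
        (\<Prod>i<m. (p - real i)) * ((p - real m) * (1 + t) powr (p - real m - 1) * 1)) (at t)"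
      by (intro DERIV_cmult DERIV_powr[THEN DERIV_cong] derivative_eq_intros) (use pos in auto)
    have d2: "(\<Prod>i<m. (p - real i)) * ((p - real m) * (1 + t) powr (p - real m - 1) * 1) = D (Suc m) t"
      by (simp add: D_def algebra_simps diff_diff_eq)
    have d3: "D m = (\<lambda>t. (\<Prod>i<m. (p - real i)) * (1 + t) powr (p - real m))" by (simp add: D_def)
    show "(D m has_real_derivative D (Suc m) t) (at t)" using d1 unfolding d2 d3[symmetric] .
  qed
  have "\<exists>t. (if w < 0 then w < t \<and> t < 0 else 0 < t \<and> t < w) \<and>
         (\<lambda>w. (1 + w) powr p) w = (\<Sum>m<3. D m 0 / fact m * (w - 0) ^ m) + D 3 t / fact 3 * (w - 0) ^ 3"
    by (rule Taylor[of 3 D "\<lambda>w. (1 + w) powr p" "-1/5" "1/5" 0 w]) (use assms False der in \<open>auto simp: D_def\<close>)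
  then obtain t where ti: "(if w < 0 then w < t \<and> t < 0 else 0 < t \<and> t < w)" and
     eq0: "(1 + w) powr p = (\<Sum>m<3. D m 0 / fact m * (w - 0) ^ m) + D 3 t / fact 3 * (w - 0) ^ 3"
    by blast
  have t: "\<bar>t\<bar> \<le> 1/5" using ti assms by (auto split: if_splits)
  have eq: "(1 + w) powr p = (\<Sum>m<3. D m 0 / fact m * w ^ m) + D 3 t / 6 * w ^ 3"
    using eq0 by (simp add: fact_numeral)
  have sum: "(\<Sum>m<3. D m 0 / fact m * w ^ m) = 1 + p * w + p * (p - 1) / 2 * w\<^sup>2"
    by (simp add: D_def eval_nat_numeral lessThan_Suc field_simps)
  have D3: "D 3 t = p * (p - 1) * (p - 2) * (1 + t) powr (p - 3)"
    by (simp add: D_def eval_nat_numeral lessThan_Suc algebra_simps)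
  have b1: "(1 + t) powr (p - 3) \<le> (4/5) powr (p - 3) + (6/5) powr (p - 3)"
  proof (cases "p - 3 \<ge> 0")
    case True
    then have "(1 + t) powr (p - 3) \<le> (6/5) powr (p - 3)" using t by (intro powr_mono2) auto
    then show ?thesis by (smt (verit) powr_ge_zero)
  next
    case False
    then have "(1 + t) powr (p - 3) \<le> (4/5) powr (p - 3)" using t by (intro powr_mono2') auto
    then show ?thesis by (smt (verit) powr_ge_zero)
  qed
  have "\<bar>D 3 t / 6 * w ^ 3\<bar> \<le> CA p * \<bar>w\<bar> ^ 3"
    unfolding D3 CA_def using b1
    by (simp add: abs_mult power_abs divide_simps mult_left_mono mult_right_mono)
  then show ?thesis using eq sum by simp
qed

definition Lf :: "real \<Rightarrow> real" where "Lf u = ln (u\<^sup>2 + 2)"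

lemma B_bound:
  fixes x w \<alpha> \<epsilon> :: real
  assumes x2: "x \<ge> 2" and w: "\<bar>w\<bar> \<le> 1/5" and eps: "\<epsilon> = 1 / Lf x"
    and epsa: "\<epsilon> \<le> 1 / (2 + 2 * \<bar>\<alpha>\<bar>)" and Lx: "Lf x \<le> x\<^sup>2"
  shows "\<bar>(ln (x\<^sup>2 * (w + 1)\<^sup>2 + 2) / ln (x\<^sup>2 + 2)) powr \<alpha> - 1 - 2 * \<alpha> * \<epsilon> * w\<bar>
           \<le> (200 * \<alpha>\<^sup>2 + 70 * \<bar>\<alpha>\<bar>) * (w\<^sup>2 * \<epsilon> + \<bar>w\<bar> * \<epsilon>\<^sup>2)"
    and "\<bar>(ln (x\<^sup>2 * (w + 1)\<^sup>2 + 2) / ln (x\<^sup>2 + 2)) powr \<alpha> - 1\<bar> \<le> (40 * \<alpha>\<^sup>2 + 15 * \<bar>\<alpha>\<bar>) * \<bar>w\<bar> * \<epsilon>"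
proof -
  have x2pos: "x\<^sup>2 \<ge> 4" proof -
    have "x\<^sup>2 \<ge> 2\<^sup>2" using x2 by (intro power_mono) auto
    then show ?thesis by simp
  qed
  have Lpos: "Lf x > 1"
  proof -
    have "exp 1 < x\<^sup>2 + 2" using exp_le x2pos by linarith
    then have "ln (exp 1) < ln (x\<^sup>2 + 2)" using x2pos by (subst ln_less_cancel_iff) auto
    then show ?thesis unfolding Lf_def by simp
  qed
  have e0: "\<epsilon> > 0" using eps Lpos by simp
  have e1: "\<epsilon> \<le> 1/2"
  proof -
    have "1 / (2 + 2 * \<bar>\<alpha>\<bar>) \<le> 1 / 2" by (rule frac_le) auto
    then show ?thesis using epsa by linarith
  qed
  have ex: "1 / x\<^sup>2 \<le> \<epsilon>" using eps Lx Lpos by (simp add: frac_le)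
  have nz: "x\<^sup>2 + 2 \<noteq> 0" by (smt (verit) zero_le_power2)
  define y where "y = x\<^sup>2 * (2 * w + w\<^sup>2) / (x\<^sup>2 + 2)"
  have eq1: "x\<^sup>2 * (w + 1)\<^sup>2 + 2 = (x\<^sup>2 + 2) * (1 + y)"
    unfolding y_def using nz by (simp add: field_simps power2_eq_square)
  have dpos: "x\<^sup>2 + 2 > 0" by (smt (verit) zero_le_power2)
  have q: "x\<^sup>2 / (x\<^sup>2 + 2) \<le> 1" "x\<^sup>2 / (x\<^sup>2 + 2) \<ge> 0" using dpos by (auto simp: divide_le_eq_1)
  have ww: "w\<^sup>2 \<le> \<bar>w\<bar> / 5"
  proof -
    have "w\<^sup>2 = \<bar>w\<bar> * \<bar>w\<bar>" by (simp add: power2_eq_square)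
    also have "\<dots> \<le> \<bar>w\<bar> * (1/5)" by (intro mult_left_mono) (use w in auto)
    finally show ?thesis by simp
  qed
  have y1: "\<bar>y\<bar> \<le> 11/5 * \<bar>w\<bar>"
  proof -
    have "\<bar>y\<bar> = x\<^sup>2 / (x\<^sup>2 + 2) * \<bar>2 * w + w\<^sup>2\<bar>" unfolding y_def by (simp add: abs_mult)
    also have "\<dots> \<le> \<bar>2 * w + w\<^sup>2\<bar>" by (rule mult_left_le_one_le[OF abs_ge_zero q(2) q(1)])
    also have "\<dots> \<le> 11/5 * \<bar>w\<bar>"
    proof -
      have "\<bar>2 * w + w\<^sup>2\<bar> \<le> \<bar>2 * w\<bar> + \<bar>w\<^sup>2\<bar>" by (rule abs_triangle_ineq)
      moreover have "\<bar>2 * w\<bar> = 2 * \<bar>w\<bar>" "\<bar>w\<^sup>2\<bar> = w\<^sup>2" by (simp_all add: abs_mult)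
      ultimately show ?thesis using ww by linarith
    qed
    finally show ?thesis .
  qed
  have yh: "\<bar>y\<bar> \<le> 1/2" using y1 w by linarith
  have y2: "\<bar>y - 2 * w\<bar> \<le> w\<^sup>2 + 4 * \<bar>w\<bar> * \<epsilon>"
  proof -
    have "y - 2 * w = (x\<^sup>2 * (2 * w + w\<^sup>2) - 2 * w * (x\<^sup>2 + 2)) / (x\<^sup>2 + 2)"
      unfolding y_def using nz by (simp add: diff_divide_distrib)
    also have "\<dots> = (x\<^sup>2 * w\<^sup>2 - 4 * w) / (x\<^sup>2 + 2)" by (simp add: algebra_simps)
    also have "\<dots> = x\<^sup>2 / (x\<^sup>2 + 2) * w\<^sup>2 - 4 * w / (x\<^sup>2 + 2)" by (simp add: diff_divide_distrib)
    finally have "y - 2 * w = x\<^sup>2 / (x\<^sup>2 + 2) * w\<^sup>2 - 4 * w / (x\<^sup>2 + 2)" .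
    moreover have "\<bar>x\<^sup>2 / (x\<^sup>2 + 2) * w\<^sup>2\<bar> \<le> w\<^sup>2"
      using mult_left_le_one_le[OF zero_le_power2 q(2) q(1), of w] q(2) by (simp add: abs_mult)
    moreover have "\<bar>4 * w / (x\<^sup>2 + 2)\<bar> \<le> 4 * \<bar>w\<bar> * \<epsilon>"
    proof -
      have "\<bar>4 * w / (x\<^sup>2 + 2)\<bar> = 4 * \<bar>w\<bar> * (1 / (x\<^sup>2 + 2))" by (simp add: abs_mult)
      also have "\<dots> \<le> 4 * \<bar>w\<bar> * (1 / x\<^sup>2)" using x2pos by (intro mult_left_mono frac_le) auto
      also have "\<dots> \<le> 4 * \<bar>w\<bar> * \<epsilon>" using ex by (intro mult_left_mono) auto
      finally show ?thesis .
    qed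
    ultimately show ?thesis by linarith
  qed
  define \<rho> where "\<rho> = ln (1 + y)"
  have r1: "\<bar>\<rho> - y\<bar> \<le> 2 * y\<^sup>2" unfolding \<rho>_def using abs_ln_one_plus_x_minus_x_bound[OF yh] .
  have yy: "y\<^sup>2 \<le> 121/25 * w\<^sup>2"
  proof -
    have "y\<^sup>2 = \<bar>y\<bar>\<^sup>2" by simp
    also have "\<dots> \<le> (11/5 * \<bar>w\<bar>)\<^sup>2" using y1 by (intro power_mono) auto
    finally show ?thesis by (simp add: power_mult_distrib power_divide)
  qed
  have rho1: "\<bar>\<rho>\<bar> \<le> 5 * \<bar>w\<bar>" using r1 yy y1 ww by linarith
  have rho2: "\<bar>\<rho> - 2 * w\<bar> \<le> 11 * w\<^sup>2 + 4 * \<bar>w\<bar> * \<epsilon>" using r1 yy y2 by linarith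
  have yp: "1 + y > 0" using yh by linarith
  have Lw: "ln (x\<^sup>2 * (w + 1)\<^sup>2 + 2) = Lf x + \<rho>"
    unfolding eq1 Lf_def \<rho>_def using yp dpos by (simp add: ln_mult)
  define z where "z = \<rho> * \<epsilon>"
  have ratio: "ln (x\<^sup>2 * (w + 1)\<^sup>2 + 2) / ln (x\<^sup>2 + 2) = 1 + z"
    unfolding Lw z_def eps Lf_def[symmetric] using Lpos by (simp add: add_divide_distrib)
  have z1: "\<bar>z\<bar> \<le> 5 * \<bar>w\<bar> * \<epsilon>" unfolding z_def using rho1 e0 by (simp add: abs_mult mult_right_mono)
  have z2: "\<bar>z\<bar> \<le> \<epsilon>"
  proof -
    have "5 * \<bar>w\<bar> * \<epsilon> \<le> 1 * \<epsilon>" by (intro mult_right_mono) (use w e0 in auto)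
    then show ?thesis using z1 by linarith
  qed
  have zh: "\<bar>z\<bar> \<le> 1/2" using z2 e1 by linarith
  define l where "l = ln (1 + z)"
  have l1: "\<bar>l - z\<bar> \<le> 2 * z\<^sup>2" unfolding l_def using abs_ln_one_plus_x_minus_x_bound[OF zh] .
  have zz: "z\<^sup>2 \<le> \<bar>z\<bar> / 2"
  proof -
    have "z\<^sup>2 = \<bar>z\<bar> * \<bar>z\<bar>" by (simp add: power2_eq_square)
    also have "\<dots> \<le> \<bar>z\<bar> * (1/2)" by (intro mult_left_mono) (use zh in auto)
    finally show ?thesis by simp
  qed
  have l2: "\<bar>l\<bar> \<le> 2 * \<bar>z\<bar>" using l1 zz by linarith
  have zp: "1 + z > 0" using zh by linarith
  have Beq: "(1 + z) powr \<alpha> = exp (\<alpha> * l)" unfolding l_def using zp by (simp add: powr_def mult.commute)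
  have al: "\<bar>\<alpha> * l\<bar> \<le> 1"
  proof -
    have "\<bar>\<alpha> * l\<bar> \<le> \<bar>\<alpha>\<bar> * (2 * \<epsilon>)" using l2 z2 by (simp add: abs_mult mult_left_mono)
    also have "\<dots> \<le> 1"
    proof -
      have "\<epsilon> * (2 + 2 * \<bar>\<alpha>\<bar>) \<le> 1" using epsa by (simp add: le_divide_eq)
      moreover have "\<bar>\<alpha>\<bar> * (2 * \<epsilon>) \<le> \<epsilon> * (2 + 2 * \<bar>\<alpha>\<bar>)" using e0 by (simp add: algebra_simps)
      ultimately show ?thesis by linarith
    qed
    finally show ?thesis .
  qed
  have ex2: "\<bar>exp (\<alpha> * l) - 1 - \<alpha> * l\<bar> \<le> 2 * (\<alpha> * l)\<^sup>2" using exp_quad_bound[OF al] .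
  have ll: "(\<alpha> * l)\<^sup>2 \<le> 4 * \<alpha>\<^sup>2 * z\<^sup>2"
  proof -
    have "(\<alpha> * l)\<^sup>2 = \<alpha>\<^sup>2 * \<bar>l\<bar>\<^sup>2" by (simp add: power_mult_distrib)
    also have "\<dots> \<le> \<alpha>\<^sup>2 * (2 * \<bar>z\<bar>)\<^sup>2" using l2 by (intro mult_left_mono power_mono) auto
    finally show ?thesis by (simp add: power_mult_distrib power_divide)
  qed
  have B1: "\<bar>exp (\<alpha> * l) - 1 - \<alpha> * z\<bar> \<le> (8 * \<alpha>\<^sup>2 + 2 * \<bar>\<alpha>\<bar>) * z\<^sup>2"
  proof -
    have "\<bar>\<alpha> * (l - z)\<bar> \<le> \<bar>\<alpha>\<bar> * (2 * z\<^sup>2)" using l1 by (simp add: abs_mult mult_left_mono)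
    moreover have "\<alpha> * (l - z) = \<alpha> * l - \<alpha> * z" by (simp add: algebra_simps)
    moreover have "(8 * \<alpha>\<^sup>2 + 2 * \<bar>\<alpha>\<bar>) * z\<^sup>2 = 2 * (4 * \<alpha>\<^sup>2 * z\<^sup>2) + \<bar>\<alpha>\<bar> * (2 * z\<^sup>2)" by (simp add: algebra_simps)
    ultimately show ?thesis using ex2 ll by (smt (verit))
  qed
  have zsq: "z\<^sup>2 \<le> 25 * w\<^sup>2 * \<epsilon>\<^sup>2"
  proof -
    have "z\<^sup>2 = \<bar>z\<bar>\<^sup>2" by simp
    also have "\<dots> \<le> (5 * \<bar>w\<bar> * \<epsilon>)\<^sup>2" using z1 by (intro power_mono) auto
    finally show ?thesis by (simp add: power_mult_distrib power_divide)
  qed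
  have K0: "0 \<le> 8 * \<alpha>\<^sup>2 + 2 * \<bar>\<alpha>\<bar>" by simp
  have B2: "\<bar>exp (\<alpha> * l) - 1 - \<alpha> * z\<bar> \<le> (8 * \<alpha>\<^sup>2 + 2 * \<bar>\<alpha>\<bar>) * (25 * w\<^sup>2 * \<epsilon>\<^sup>2)"
    using B1 mult_left_mono[OF zsq K0] by linarith
  have w2e: "w\<^sup>2 * \<epsilon>\<^sup>2 \<le> w\<^sup>2 * \<epsilon>" using e0 e1 by (intro mult_left_mono) (auto simp: power2_eq_square)
  have t3: "\<bar>\<alpha> * \<epsilon> * (\<rho> - 2 * w)\<bar> \<le> \<bar>\<alpha>\<bar> * \<epsilon> * (11 * w\<^sup>2 + 4 * \<bar>w\<bar> * \<epsilon>)"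
    using rho2 e0 by (simp add: abs_mult mult_left_mono)
  have decomp: "exp (\<alpha> * l) - 1 - 2 * \<alpha> * \<epsilon> * w = (exp (\<alpha> * l) - 1 - \<alpha> * z) + \<alpha> * \<epsilon> * (\<rho> - 2 * w)"
    unfolding z_def by (simp add: algebra_simps)
  have "\<bar>exp (\<alpha> * l) - 1 - 2 * \<alpha> * \<epsilon> * w\<bar> \<le> (200 * \<alpha>\<^sup>2 + 70 * \<bar>\<alpha>\<bar>) * (w\<^sup>2 * \<epsilon> + \<bar>w\<bar> * \<epsilon>\<^sup>2)"
  proof -
    have a1: "(8 * \<alpha>\<^sup>2 + 2 * \<bar>\<alpha>\<bar>) * (25 * w\<^sup>2 * \<epsilon>\<^sup>2) \<le> (200 * \<alpha>\<^sup>2 + 50 * \<bar>\<alpha>\<bar>) * (w\<^sup>2 * \<epsilon>)"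
      using mult_left_mono[OF w2e K0] by (simp add: algebra_simps)
    have a2: "\<bar>\<alpha>\<bar> * \<epsilon> * (11 * w\<^sup>2 + 4 * \<bar>w\<bar> * \<epsilon>) = 11 * \<bar>\<alpha>\<bar> * (w\<^sup>2 * \<epsilon>) + 4 * \<bar>\<alpha>\<bar> * (\<bar>w\<bar> * \<epsilon>\<^sup>2)"
      by (simp add: algebra_simps power2_eq_square)
    have a3: "0 \<le> w\<^sup>2 * \<epsilon>" "0 \<le> \<bar>w\<bar> * \<epsilon>\<^sup>2" "0 \<le> \<alpha>\<^sup>2" using e0 by auto
    have a4: "(200 * \<alpha>\<^sup>2 + 70 * \<bar>\<alpha>\<bar>) * (w\<^sup>2 * \<epsilon> + \<bar>w\<bar> * \<epsilon>\<^sup>2) \<ge>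
       (200 * \<alpha>\<^sup>2 + 50 * \<bar>\<alpha>\<bar>) * (w\<^sup>2 * \<epsilon>) + 11 * \<bar>\<alpha>\<bar> * (w\<^sup>2 * \<epsilon>) + 4 * \<bar>\<alpha>\<bar> * (\<bar>w\<bar> * \<epsilon>\<^sup>2)"
    proof -
      have "(200 * \<alpha>\<^sup>2 + 70 * \<bar>\<alpha>\<bar>) * (w\<^sup>2 * \<epsilon> + \<bar>w\<bar> * \<epsilon>\<^sup>2) -
       ((200 * \<alpha>\<^sup>2 + 50 * \<bar>\<alpha>\<bar>) * (w\<^sup>2 * \<epsilon>) + 11 * \<bar>\<alpha>\<bar> * (w\<^sup>2 * \<epsilon>) + 4 * \<bar>\<alpha>\<bar> * (\<bar>w\<bar> * \<epsilon>\<^sup>2))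
       = 9 * \<bar>\<alpha>\<bar> * (w\<^sup>2 * \<epsilon>) + (200 * \<alpha>\<^sup>2 + 66 * \<bar>\<alpha>\<bar>) * (\<bar>w\<bar> * \<epsilon>\<^sup>2)"
        by (simp add: algebra_simps)
      moreover have "0 \<le> 9 * \<bar>\<alpha>\<bar> * (w\<^sup>2 * \<epsilon>) + (200 * \<alpha>\<^sup>2 + 66 * \<bar>\<alpha>\<bar>) * (\<bar>w\<bar> * \<epsilon>\<^sup>2)"
        using a3 e0 by (intro add_nonneg_nonneg mult_nonneg_nonneg) auto
      ultimately show ?thesis by linarith
    qed
    have "\<bar>exp (\<alpha> * l) - 1 - 2 * \<alpha> * \<epsilon> * w\<bar> \<le> \<bar>exp (\<alpha> * l) - 1 - \<alpha> * z\<bar> + \<bar>\<alpha> * \<epsilon> * (\<rho> - 2 * w)\<bar>"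
      unfolding decomp by (rule abs_triangle_ineq)
    then show ?thesis using B2 t3 a1 a2 a4 by linarith
  qed
  then show "\<bar>(ln (x\<^sup>2 * (w + 1)\<^sup>2 + 2) / ln (x\<^sup>2 + 2)) powr \<alpha> - 1 - 2 * \<alpha> * \<epsilon> * w\<bar>
           \<le> (200 * \<alpha>\<^sup>2 + 70 * \<bar>\<alpha>\<bar>) * (w\<^sup>2 * \<epsilon> + \<bar>w\<bar> * \<epsilon>\<^sup>2)"
    unfolding ratio Beq .
  have "\<bar>exp (\<alpha> * l) - 1\<bar> \<le> (40 * \<alpha>\<^sup>2 + 15 * \<bar>\<alpha>\<bar>) * \<bar>w\<bar> * \<epsilon>"
  proof -
    have c1: "\<bar>\<alpha> * z\<bar> \<le> \<bar>\<alpha>\<bar> * (5 * \<bar>w\<bar> * \<epsilon>)" using z1 by (simp add: abs_mult mult_left_mono)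
    have "z\<^sup>2 \<le> 5 * \<bar>w\<bar> * \<epsilon>"
    proof -
      have "z\<^sup>2 = \<bar>z\<bar> * \<bar>z\<bar>" by (simp add: power2_eq_square)
      also have "\<dots> \<le> \<bar>z\<bar>" by (intro mult_left_le) (use zh in auto)
      finally show ?thesis using z1 by linarith
    qed
    then have c2: "(8 * \<alpha>\<^sup>2 + 2 * \<bar>\<alpha>\<bar>) * z\<^sup>2 \<le> (8 * \<alpha>\<^sup>2 + 2 * \<bar>\<alpha>\<bar>) * (5 * \<bar>w\<bar> * \<epsilon>)"
      using K0 by (intro mult_left_mono)
    show ?thesis using B1 c1 c2 by (simp add: algebra_simps) linarith
  qed
  then show "\<bar>(ln (x\<^sup>2 * (w + 1)\<^sup>2 + 2) / ln (x\<^sup>2 + 2)) powr \<alpha> - 1\<bar> \<le> (40 * \<alpha>\<^sup>2 + 15 * \<bar>\<alpha>\<bar>) * \<bar>w\<bar> * \<epsilon>"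
    unfolding ratio Beq .
qed

lemma sum3_le:
  fixes K a1 a2 a3 X1 X2 X3 :: real
  assumes "0 \<le> X1" "0 \<le> X2" "0 \<le> X3" "a1 \<le> K" "a2 \<le> K" "a3 \<le> K"
  shows "a1 * X1 + a2 * X2 + a3 * X3 \<le> K * (X1 + X2 + X3)"
proof -
  have "a1 * X1 \<le> K * X1" "a2 * X2 \<le> K * X2" "a3 * X3 \<le> K * X3"
    using assms by (auto intro: mult_right_mono)
  then show ?thesis by (simp add: algebra_simps)
qed

definition KB :: "real \<Rightarrow> real" where "KB \<alpha> = 200 * \<alpha>\<^sup>2 + 70 * \<bar>\<alpha>\<bar>"
definition KB1 :: "real \<Rightarrow> real" where "KB1 \<alpha> = 40 * \<alpha>\<^sup>2 + 15 * \<bar>\<alpha>\<bar>"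
definition CA1 :: "real \<Rightarrow> real" where "CA1 p = p + p * (p - 1) / 2 + CA p"
definition KN :: "real \<Rightarrow> real \<Rightarrow> real \<Rightarrow> real \<Rightarrow> real" where
  "KN p \<alpha> H K1 = K1 + p / 2 * (K1 + 2 * \<bar>\<alpha>\<bar> * H) + H * CA p + H * KB1 \<alpha> * CA1 p + H * KB \<alpha>"

lemma CA_nonneg: "CA p \<ge> 0"
  unfolding CA_def by (intro divide_nonneg_pos mult_nonneg_nonneg add_nonneg_nonneg) auto

lemma N_bound:
  fixes x w h p \<alpha> \<epsilon> H K1 :: real
  assumes p: "p > 1" and x2: "x \<ge> 2" and w: "\<bar>w\<bar> \<le> 1/5" and eps: "\<epsilon> = 1 / Lf x"
    and epsa: "\<epsilon> \<le> 1 / (2 + 2 * \<bar>\<alpha>\<bar>)" and Lx: "Lf x \<le> x\<^sup>2"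
    and h0: "0 \<le> h" and hH: "h \<le> H" and hg: "\<bar>h * ((p - 1) + 2 * \<alpha> * \<epsilon>) - 1\<bar> \<le> K1 * \<epsilon>\<^sup>2"
  shows "\<bar>h * \<bar>w + 1\<bar> powr (p - 1) * (w + 1) * ln (x\<^sup>2 * (w + 1)\<^sup>2 + 2) powr \<alpha> / ln (x\<^sup>2 + 2) powr \<alpha>
           - h * (w + 1) - w - p * w\<^sup>2 / 2\<bar>
         \<le> KN p \<alpha> H K1 * (\<bar>w\<bar> * \<epsilon>\<^sup>2 + w\<^sup>2 * \<epsilon> + \<bar>w\<bar> ^ 3)"
proof -
  have Lpos: "Lf x > 1"
  proof -
    have "x\<^sup>2 \<ge> 2\<^sup>2" using x2 by (intro power_mono) auto
    then have "exp 1 < x\<^sup>2 + 2" using exp_le by simp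
    moreover have "x\<^sup>2 + 2 > 0" by (smt (verit) zero_le_power2)
    ultimately have "ln (exp 1) < ln (x\<^sup>2 + 2)" by (subst ln_less_cancel_iff) auto
    then show ?thesis unfolding Lf_def by simp
  qed
  have e0: "\<epsilon> > 0" using eps Lpos by simp
  have e1: "\<epsilon> \<le> 1" using eps Lpos by simp
  have K10: "K1 \<ge> 0"
  proof -
    have "0 \<le> K1 * \<epsilon>\<^sup>2" using hg abs_ge_zero order_trans by blast
    then show ?thesis using e0 by (simp add: zero_le_mult_iff)
  qed
  have H0: "H \<ge> 0" using h0 hH by linarith
  have wp: "w + 1 > 0" using w by linarith
  define A where "A = (1 + w) powr p"
  define B where "B = (ln (x\<^sup>2 * (w + 1)\<^sup>2 + 2) / ln (x\<^sup>2 + 2)) powr \<alpha>"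
  have Aeq: "\<bar>w + 1\<bar> powr (p - 1) * (w + 1) = A"
  proof -
    have "\<bar>w + 1\<bar> powr (p - 1) * (w + 1) = (w + 1) powr (p - 1) * (w + 1) powr 1" using wp by simp
    also have "\<dots> = (w + 1) powr p" by (subst powr_add[symmetric]) simp
    finally show ?thesis unfolding A_def by (simp add: add.commute)
  qed
  have n1: "0 \<le> ln (x\<^sup>2 * (w + 1)\<^sup>2 + 2)" by simp
  have n2: "0 \<le> ln (x\<^sup>2 + 2)" by simp
  have Beq: "ln (x\<^sup>2 * (w + 1)\<^sup>2 + 2) powr \<alpha> / ln (x\<^sup>2 + 2) powr \<alpha> = B"
    unfolding B_def by (rule powr_divide[symmetric])
  have expr: "h * \<bar>w + 1\<bar> powr (p - 1) * (w + 1) * ln (x\<^sup>2 * (w + 1)\<^sup>2 + 2) powr \<alpha> / ln (x\<^sup>2 + 2) powr \<alpha>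
      = h * A * B"
    using Aeq Beq by (metis times_divide_eq_right mult.assoc)
  define RA where "RA = A - 1 - p * w - p * (p - 1) / 2 * w\<^sup>2"
  define RB where "RB = B - 1 - 2 * \<alpha> * \<epsilon> * w"
  define u1 where "u1 = h * ((p - 1) + 2 * \<alpha> * \<epsilon>) - 1"
  have ident: "h * A * B - h * (w + 1) - w - p * w\<^sup>2 / 2
     = w * u1 + (p / 2) * w\<^sup>2 * (u1 - 2 * \<alpha> * \<epsilon> * h) + h * RA + h * (B - 1) * (A - 1) + h * RB"
    unfolding RA_def RB_def u1_def by (simp add: field_simps power2_eq_square)
  have RAb: "\<bar>RA\<bar> \<le> CA p * \<bar>w\<bar> ^ 3" unfolding RA_def A_def using powr_taylor3[OF w] .
  have RBb: "\<bar>RB\<bar> \<le> KB \<alpha> * (w\<^sup>2 * \<epsilon> + \<bar>w\<bar> * \<epsilon>\<^sup>2)" unfolding RB_def B_def KB_def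
    using B_bound(1)[OF x2 w eps epsa Lx] .
  have B1b: "\<bar>B - 1\<bar> \<le> KB1 \<alpha> * \<bar>w\<bar> * \<epsilon>" unfolding B_def KB1_def
    using B_bound(2)[OF x2 w eps epsa Lx] .
  have ww: "w\<^sup>2 \<le> \<bar>w\<bar>" "\<bar>w\<bar> ^ 3 \<le> \<bar>w\<bar>"
  proof -
    have "\<bar>w\<bar> * \<bar>w\<bar> \<le> \<bar>w\<bar> * 1" by (intro mult_left_mono) (use w in auto)
    then show "w\<^sup>2 \<le> \<bar>w\<bar>" by (simp add: power2_eq_square)
    have "\<bar>w\<bar> * (\<bar>w\<bar> * \<bar>w\<bar>) \<le> \<bar>w\<bar> * 1"
      by (intro mult_left_mono mult_le_one) (use w in auto)
    then show "\<bar>w\<bar> ^ 3 \<le> \<bar>w\<bar>" by (simp add: power3_eq_cube)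
  qed
  have A1b: "\<bar>A - 1\<bar> \<le> CA1 p * \<bar>w\<bar>"
  proof -
    have "A - 1 = p * w + p * (p - 1) / 2 * w\<^sup>2 + RA" unfolding RA_def by simp
    then have "\<bar>A - 1\<bar> \<le> \<bar>p * w\<bar> + \<bar>p * (p - 1) / 2 * w\<^sup>2\<bar> + \<bar>RA\<bar>"
      using abs_triangle_ineq[of "p * w + p * (p - 1) / 2 * w\<^sup>2" RA] abs_triangle_ineq[of "p * w" "p * (p - 1) / 2 * w\<^sup>2"]
      by linarith
    moreover have "\<bar>p * w\<bar> = p * \<bar>w\<bar>" "\<bar>p * (p - 1) / 2 * w\<^sup>2\<bar> = p * (p - 1) / 2 * w\<^sup>2"
      using p by (simp_all add: abs_mult)
    ultimately have "\<bar>A - 1\<bar> \<le> p * \<bar>w\<bar> + p * (p - 1) / 2 * w\<^sup>2 + CA p * \<bar>w\<bar> ^ 3"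
      using RAb by linarith
    moreover have "p * (p - 1) / 2 * w\<^sup>2 \<le> p * (p - 1) / 2 * \<bar>w\<bar>" using ww p by (intro mult_left_mono) auto
    moreover have "CA p * \<bar>w\<bar> ^ 3 \<le> CA p * \<bar>w\<bar>" using ww CA_nonneg by (intro mult_left_mono) auto
    moreover have "(p + p * (p - 1) / 2 + CA p) * \<bar>w\<bar> = p * \<bar>w\<bar> + p * (p - 1) / 2 * \<bar>w\<bar> + CA p * \<bar>w\<bar>"
      by (simp add: distrib_right)
    ultimately show ?thesis unfolding CA1_def by linarith
  qed
  have KB0: "KB \<alpha> \<ge> 0" "KB1 \<alpha> \<ge> 0" unfolding KB_def KB1_def by auto
  have CA10: "CA1 p \<ge> 0" unfolding CA1_def using p CA_nonneg by auto
  have e2: "\<epsilon>\<^sup>2 \<le> \<epsilon>" using e0 e1 by (simp add: power2_eq_square mult_left_le)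
  define X1 where "X1 = \<bar>w\<bar> * \<epsilon>\<^sup>2"
  define X2 where "X2 = w\<^sup>2 * \<epsilon>"
  define X3 where "X3 = \<bar>w\<bar> ^ 3"
  have X0: "0 \<le> X1" "0 \<le> X2" "0 \<le> X3" unfolding X1_def X2_def X3_def using e0 by auto
  have T1: "\<bar>w * u1\<bar> \<le> K1 * X1"
  proof -
    have "\<bar>w * u1\<bar> = \<bar>w\<bar> * \<bar>u1\<bar>" by (simp add: abs_mult)
    also have "\<dots> \<le> \<bar>w\<bar> * (K1 * \<epsilon>\<^sup>2)" using hg unfolding u1_def by (intro mult_left_mono) auto
    finally show ?thesis unfolding X1_def by (simp add: algebra_simps)
  qed
  have T2: "\<bar>(p / 2) * w\<^sup>2 * (u1 - 2 * \<alpha> * \<epsilon> * h)\<bar> \<le> (p / 2 * (K1 + 2 * \<bar>\<alpha>\<bar> * H)) * X2"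
  proof -
    have "\<bar>u1 - 2 * \<alpha> * \<epsilon> * h\<bar> \<le> \<bar>u1\<bar> + 2 * \<bar>\<alpha>\<bar> * \<epsilon> * h"
    proof -
      have "\<bar>2 * \<alpha> * \<epsilon> * h\<bar> = 2 * \<bar>\<alpha>\<bar> * \<epsilon> * h" using e0 h0 by (simp add: abs_mult)
      then show ?thesis using abs_triangle_ineq4[of u1 "2 * \<alpha> * \<epsilon> * h"] by linarith
    qed
    also have "\<dots> \<le> K1 * \<epsilon> + 2 * \<bar>\<alpha>\<bar> * \<epsilon> * H"
    proof -
      have "\<bar>u1\<bar> \<le> K1 * \<epsilon>" using hg mult_left_mono[OF e2 K10] unfolding u1_def by linarith
      moreover have "2 * \<bar>\<alpha>\<bar> * \<epsilon> * h \<le> 2 * \<bar>\<alpha>\<bar> * \<epsilon> * H" using hH e0 by (intro mult_left_mono) auto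
      ultimately show ?thesis by linarith
    qed
    finally have "\<bar>u1 - 2 * \<alpha> * \<epsilon> * h\<bar> \<le> (K1 + 2 * \<bar>\<alpha>\<bar> * H) * \<epsilon>" by (simp add: algebra_simps)
    then have "p / 2 * w\<^sup>2 * \<bar>u1 - 2 * \<alpha> * \<epsilon> * h\<bar> \<le> p / 2 * w\<^sup>2 * ((K1 + 2 * \<bar>\<alpha>\<bar> * H) * \<epsilon>)"
      using p by (intro mult_left_mono) auto
    moreover have "\<bar>(p / 2) * w\<^sup>2 * (u1 - 2 * \<alpha> * \<epsilon> * h)\<bar> = p / 2 * w\<^sup>2 * \<bar>u1 - 2 * \<alpha> * \<epsilon> * h\<bar>"
      using p by (simp add: abs_mult)
    ultimately show ?thesis unfolding X2_def by (simp add: algebra_simps)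
  qed
  have T3: "\<bar>h * RA\<bar> \<le> (H * CA p) * X3"
  proof -
    have "\<bar>h * RA\<bar> = h * \<bar>RA\<bar>" using h0 by (simp add: abs_mult)
    also have "\<dots> \<le> H * (CA p * \<bar>w\<bar> ^ 3)" using RAb hH h0 by (intro mult_mono) auto
    finally show ?thesis unfolding X3_def by (simp add: algebra_simps)
  qed
  have T4: "\<bar>h * (B - 1) * (A - 1)\<bar> \<le> (H * KB1 \<alpha> * CA1 p) * X2"
  proof -
    have "\<bar>h * (B - 1) * (A - 1)\<bar> = h * (\<bar>B - 1\<bar> * \<bar>A - 1\<bar>)" using h0 by (simp add: abs_mult)
    also have "\<dots> \<le> H * ((KB1 \<alpha> * \<bar>w\<bar> * \<epsilon>) * (CA1 p * \<bar>w\<bar>))"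
      using B1b A1b hH h0 by (intro mult_mono) auto
    finally show ?thesis unfolding X2_def by (simp add: algebra_simps power2_eq_square)
  qed
  have T5: "\<bar>h * RB\<bar> \<le> (H * KB \<alpha>) * X2 + (H * KB \<alpha>) * X1"
  proof -
    have "\<bar>h * RB\<bar> = h * \<bar>RB\<bar>" using h0 by (simp add: abs_mult)
    also have "\<dots> \<le> H * (KB \<alpha> * (w\<^sup>2 * \<epsilon> + \<bar>w\<bar> * \<epsilon>\<^sup>2))" using RBb hH h0 by (intro mult_mono) auto
    finally show ?thesis unfolding X1_def X2_def by (simp add: algebra_simps)
  qed
  have sumb: "(K1 + H * KB \<alpha>) * X1 + (p / 2 * (K1 + 2 * \<bar>\<alpha>\<bar> * H) + H * KB1 \<alpha> * CA1 p + H * KB \<alpha>) * X2 + (H * CA p) * X3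
      \<le> KN p \<alpha> H K1 * (X1 + X2 + X3)"
  proof (rule sum3_le[OF X0])
    have n: "0 \<le> p / 2 * (K1 + 2 * \<bar>\<alpha>\<bar> * H)" "0 \<le> H * CA p" "0 \<le> H * KB1 \<alpha> * CA1 p" "0 \<le> H * KB \<alpha>"
      using p K10 H0 CA_nonneg KB0 CA10 by auto
    show "K1 + H * KB \<alpha> \<le> KN p \<alpha> H K1" unfolding KN_def using n by linarith
    show "p / 2 * (K1 + 2 * \<bar>\<alpha>\<bar> * H) + H * KB1 \<alpha> * CA1 p + H * KB \<alpha> \<le> KN p \<alpha> H K1" unfolding KN_def using n K10 by linarith
    show "H * CA p \<le> KN p \<alpha> H K1" unfolding KN_def using n K10 by linarith
  qed
  have tri: "\<bar>w * u1 + (p / 2) * w\<^sup>2 * (u1 - 2 * \<alpha> * \<epsilon> * h) + h * RA + h * (B - 1) * (A - 1) + h * RB\<bar>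
     \<le> \<bar>w * u1\<bar> + \<bar>(p / 2) * w\<^sup>2 * (u1 - 2 * \<alpha> * \<epsilon> * h)\<bar> + \<bar>h * RA\<bar> + \<bar>h * (B - 1) * (A - 1)\<bar> + \<bar>h * RB\<bar>"
    using abs_triangle_ineq[of "w * u1 + (p / 2) * w\<^sup>2 * (u1 - 2 * \<alpha> * \<epsilon> * h) + h * RA + h * (B - 1) * (A - 1)" "h * RB"]
      abs_triangle_ineq[of "w * u1 + (p / 2) * w\<^sup>2 * (u1 - 2 * \<alpha> * \<epsilon> * h) + h * RA" "h * (B - 1) * (A - 1)"]
      abs_triangle_ineq[of "w * u1 + (p / 2) * w\<^sup>2 * (u1 - 2 * \<alpha> * \<epsilon> * h)" "h * RA"]
      abs_triangle_ineq[of "w * u1" "(p / 2) * w\<^sup>2 * (u1 - 2 * \<alpha> * \<epsilon> * h)"]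
    by linarith
  have "\<bar>h * A * B - h * (w + 1) - w - p * w\<^sup>2 / 2\<bar> \<le> KN p \<alpha> H K1 * (X1 + X2 + X3)"
  proof -
    have eqs: "(K1 + H * KB \<alpha>) * X1 + (p / 2 * (K1 + 2 * \<bar>\<alpha>\<bar> * H) + H * KB1 \<alpha> * CA1 p + H * KB \<alpha>) * X2 + (H * CA p) * X3
      = K1 * X1 + ((H * KB \<alpha>) * X2 + (H * KB \<alpha>) * X1) + (p / 2 * (K1 + 2 * \<bar>\<alpha>\<bar> * H)) * X2 + (H * KB1 \<alpha> * CA1 p) * X2 + (H * CA p) * X3"
      by (simp add: algebra_simps)
    show ?thesis unfolding ident using tri T1 T2 T3 T4 T5 sumb eqs by linarith
  qed
  then show ?thesis unfolding expr X1_def X2_def X3_def .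
qed

lemma sq2_pos[simp]: "u\<^sup>2 + 2 > (0::real)" "u\<^sup>2 + 2 \<noteq> (0::real)"
  by (smt (verit) zero_le_power2)+

lemma Lf_pos: "Lf u > 0"
proof -
  have "u\<^sup>2 + 2 > (1::real)" by (smt (verit) zero_le_power2)
  then show ?thesis unfolding Lf_def by simp
qed

lemma Lf_le: "Lf u \<le> u\<^sup>2 + 2"
  unfolding Lf_def by (smt (verit) ln_le_minus_one zero_le_power2)

lemma Lf_mono: "0 \<le> u \<Longrightarrow> u \<le> v \<Longrightarrow> Lf u \<le> Lf v"
  unfolding Lf_def by (subst ln_le_cancel_iff) (auto intro: power_mono add_pos_nonneg)

lemma Lf_le_sq: assumes "u \<ge> 2" shows "Lf u \<le> u\<^sup>2"
proof -
  have u4: "u\<^sup>2 \<ge> 4" using power_mono[of 2 u 2] assms by simp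
  have "Lf u = ln (2 * (1 + u\<^sup>2 / 2))" unfolding Lf_def by (simp add: algebra_simps)
  also have "\<dots> = ln 2 + ln (1 + u\<^sup>2 / 2)"
  proof -
    have "1 + u\<^sup>2 / 2 > 0" by (smt (verit) zero_le_power2 divide_nonneg_pos)
    then show ?thesis by (subst ln_mult) auto
  qed
  also have "\<dots> \<le> ln 2 + u\<^sup>2 / 2" using ln_add_one_self_le_self[of "u\<^sup>2 / 2"] by simp
  also have "\<dots> \<le> u\<^sup>2" using ln_2_less_1 u4 by linarith
  finally show ?thesis .
qed

lemma Lf_ge_ln: assumes "u \<ge> 1" shows "ln u \<le> Lf u"
proof -
  have "u \<le> u * u" using assms by (simp add: mult_le_cancel_left1)
  then have "u \<le> u\<^sup>2 + 2" by (simp add: power2_eq_square)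
  then show ?thesis unfolding Lf_def using assms by (subst ln_le_cancel_iff) auto
qed

lemma Lf_deriv: "(Lf has_real_derivative (2 * u / (u\<^sup>2 + 2))) (at u)"
proof -
  have d: "((\<lambda>u. u\<^sup>2 + 2) has_real_derivative 2 * u) (at u)"
    by (auto intro!: derivative_eq_intros)
  have "((\<lambda>u. ln (u\<^sup>2 + 2)) has_real_derivative inverse (u\<^sup>2 + 2) * (2 * u)) (at u)"
    by (rule DERIV_chain2[OF DERIV_ln d]) simp
  then show ?thesis unfolding Lf_def[abs_def] by (simp add: field_simps)
qed

definition gt :: "real \<Rightarrow> real \<Rightarrow> real \<Rightarrow> real" where "gt p \<alpha> u = (p - 1) + 2 * \<alpha> / Lf u"
definition Phi0 :: "real \<Rightarrow> real \<Rightarrow> real \<Rightarrow> real" where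
  "Phi0 p \<alpha> u = u powr (1 - p) * Lf u powr (- \<alpha>) / gt p \<alpha> u"
definition Rf :: "real \<Rightarrow> real \<Rightarrow> real \<Rightarrow> real" where
  "Rf p \<alpha> u = 4 * \<alpha> / ((u\<^sup>2 + 2) * Lf u * gt p \<alpha> u)
      + 2 * \<alpha> * (2 * u\<^sup>2 / (u\<^sup>2 + 2)) / ((Lf u)\<^sup>2 * (gt p \<alpha> u)\<^sup>2)"

lemma Phi0_deriv:
  assumes u: "u > 0" and g: "gt p \<alpha> u \<noteq> 0"
  shows "(Phi0 p \<alpha> has_real_derivative (-1 + Rf p \<alpha> u) / (u powr p * Lf u powr \<alpha>)) (at u)"
proof -
  define L where "L = Lf u"
  define a where "a = u powr (1 - p)"
  define b where "b = L powr (- \<alpha>)"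
  define m where "m = 2 * u / (u\<^sup>2 + 2)"
  have Lp: "L > 0" unfolding L_def by (rule Lf_pos)
  have ap: "a > 0" "b > 0" unfolding a_def b_def using u Lp by auto
  have d2p: "u\<^sup>2 + 2 > 0" by (smt (verit) zero_le_power2)
  have da: "((\<lambda>u. u powr (1 - p)) has_real_derivative (1 - p) * u powr (1 - p - 1)) (at u)"
    using has_real_derivative_powr[OF u] .
  have db: "((\<lambda>u. Lf u powr (- \<alpha>)) has_real_derivative (- \<alpha>) * Lf u powr (- \<alpha> - 1) * m) (at u)"
    using DERIV_fun_powr[OF Lf_deriv[of u] Lf_pos[of u], of "- \<alpha>"] unfolding m_def by simp
  have dg: "(gt p \<alpha> has_real_derivative (- (2 * \<alpha> * m / L\<^sup>2))) (at u)"
  proof -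
    have "((\<lambda>u. 2 * \<alpha> / Lf u) has_real_derivative (0 * Lf u - 2 * \<alpha> * (2 * u / (u\<^sup>2 + 2))) / (Lf u * Lf u)) (at u)"
      using DERIV_divide[OF DERIV_const[of "2 * \<alpha>" "at u"] Lf_deriv[of u]] Lf_pos[of u] by simp
    then have "((\<lambda>u. (p - 1) + 2 * \<alpha> / Lf u) has_real_derivative 0 + (0 * Lf u - 2 * \<alpha> * (2 * u / (u\<^sup>2 + 2))) / (Lf u * Lf u)) (at u)"
      by (intro DERIV_add DERIV_const)
    moreover have "0 + (0 * Lf u - 2 * \<alpha> * (2 * u / (u\<^sup>2 + 2))) / (Lf u * Lf u) = - (2 * \<alpha> * m / L\<^sup>2)"
      unfolding m_def L_def by (simp add: power2_eq_square)
    ultimately have "((\<lambda>u. (p - 1) + 2 * \<alpha> / Lf u) has_real_derivative - (2 * \<alpha> * m / L\<^sup>2)) (at u)" by simp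
    then show ?thesis unfolding gt_def[abs_def] by simp
  qed
  have dE: "((\<lambda>u. u powr (1 - p) * Lf u powr (- \<alpha>)) has_real_derivative
      (1 - p) * u powr (1 - p - 1) * Lf u powr (- \<alpha>) + u powr (1 - p) * ((- \<alpha>) * Lf u powr (- \<alpha> - 1) * m)) (at u)"
    using DERIV_mult[OF da db] by (simp add: mult.commute)
  have dP: "(Phi0 p \<alpha> has_real_derivative
      (((1 - p) * u powr (1 - p - 1) * Lf u powr (- \<alpha>) + u powr (1 - p) * ((- \<alpha>) * Lf u powr (- \<alpha> - 1) * m)) * gt p \<alpha> u
        - u powr (1 - p) * Lf u powr (- \<alpha>) * (- (2 * \<alpha> * m / L\<^sup>2))) / (gt p \<alpha> u)\<^sup>2) (at u)"
    unfolding Phi0_def[abs_def] using DERIV_divide[OF dE dg g] by (simp add: power2_eq_square)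
  have e1: "u powr (1 - p - 1) = a / u" unfolding a_def using powr_diff[of u "1 - p" 1] u by simp
  have e2: "Lf u powr (- \<alpha> - 1) = b / L" unfolding b_def L_def using powr_diff[of "Lf u" "- \<alpha>" 1] Lf_pos[of u] by simp
  have e3: "u powr p * Lf u powr \<alpha> = u / (a * b)"
  proof -
    have "a = u / u powr p" unfolding a_def using powr_diff[of u 1 p] u by simp
    then have "u powr p = u / a" using u ap by (simp add: field_simps)
    moreover have "Lf u powr \<alpha> = 1 / b" unfolding b_def L_def by (simp add: powr_minus divide_simps)
    ultimately show ?thesis by simp
  qed
  have gL: "gt p \<alpha> u = (p - 1) + 2 * \<alpha> / L" unfolding gt_def L_def ..
  have RL: "Rf p \<alpha> u = 4 * \<alpha> / ((u\<^sup>2 + 2) * L * gt p \<alpha> u) + 2 * \<alpha> * (u * m) / (L\<^sup>2 * (gt p \<alpha> u)\<^sup>2)"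
    unfolding Rf_def L_def m_def by (simp add: power2_eq_square)
  have key: "(((1 - p) * (a / u) * b + a * ((- \<alpha>) * (b / L) * m)) * gt p \<alpha> u
        - a * b * (- (2 * \<alpha> * m / L\<^sup>2))) / (gt p \<alpha> u)\<^sup>2
      = (-1 + Rf p \<alpha> u) / (u / (a * b))"
  proof -
    define g where "g = gt p \<alpha> u"
    define X where "X = 4 * \<alpha> / ((u\<^sup>2 + 2) * L)"
    define Y where "Y = 2 * \<alpha> * (u * m) / L\<^sup>2"
    have gn: "g \<noteq> 0" using g unfolding g_def .
    have s1: "\<alpha> * (u * m) / L = 2 * \<alpha> / L - X"
    proof -
      have nz2: "L * 2 + L * u\<^sup>2 \<noteq> 0" "L * u\<^sup>2 + L * 2 \<noteq> 0" "2 * L + u\<^sup>2 * L \<noteq> 0"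
      proof -
        have "0 \<le> L * u\<^sup>2" "0 \<le> u\<^sup>2 * L" using Lp by simp_all
        then show "L * 2 + L * u\<^sup>2 \<noteq> 0" "L * u\<^sup>2 + L * 2 \<noteq> 0" "2 * L + u\<^sup>2 * L \<noteq> 0" using Lp by linarith+
      qed
      show ?thesis unfolding m_def X_def using Lp nz2 by (simp add: field_simps power2_eq_square)
    qed
    have s2: "(1 - p) - \<alpha> * (u * m) / L = - g + X" using s1 gL unfolding g_def by simp
    have lhs: "(((1 - p) * (a / u) * b + a * ((- \<alpha>) * (b / L) * m)) * g - a * b * (- (2 * \<alpha> * m / L\<^sup>2))) / g\<^sup>2
       = (a * b / u) * ((((1 - p) - \<alpha> * (u * m) / L) * g + Y) / g\<^sup>2)"
      unfolding Y_def using u Lp gn by (simp add: field_simps power2_eq_square)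
    have rhs: "Rf p \<alpha> u = X / g + Y / g\<^sup>2" unfolding RL X_def Y_def g_def by (simp add: mult.assoc)
    have fin: "(a * b / u) * (((- g + X) * g + Y) / g\<^sup>2) = (-1 + (X / g + Y / g\<^sup>2)) / (u / (a * b))"
      using u ap gn by (simp add: field_simps power2_eq_square)
    show ?thesis unfolding lhs[unfolded g_def] rhs s2[unfolded g_def] fin[unfolded g_def] g_def ..
  qed
  show ?thesis using dP unfolding e1 e2 e3 key[symmetric] by (simp add: b_def L_def a_def)
qed

lemma Lf_gt1: assumes "u \<ge> 2" shows "Lf u > 1"
proof -
  have "u\<^sup>2 \<ge> 2\<^sup>2" using assms by (intro power_mono) auto
  then have "exp 1 < u\<^sup>2 + 2" using exp_le by simp
  then have "ln (exp 1) < ln (u\<^sup>2 + 2)" by (subst ln_less_cancel_iff) auto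
  then show ?thesis unfolding Lf_def by simp
qed

definition Kc :: "real \<Rightarrow> real \<Rightarrow> real" where
  "Kc p \<alpha> = 8 * \<bar>\<alpha>\<bar> / (p - 1) + 16 * \<bar>\<alpha>\<bar> / (p - 1)\<^sup>2"
definition L0 :: "real \<Rightarrow> real \<Rightarrow> real" where
  "L0 p \<alpha> = 4 * \<bar>\<alpha>\<bar> / (p - 1) + 2 + 2 * \<bar>\<alpha>\<bar> + 2 * Kc p \<alpha> + 1"

lemma Kc_nonneg: "p > 1 \<Longrightarrow> Kc p \<alpha> \<ge> 0"
  unfolding Kc_def by auto

lemma gt_bounds:
  assumes p: "p > 1" and L: "Lf u \<ge> L0 p \<alpha>"
  shows "gt p \<alpha> u \<ge> (p - 1) / 2" "gt p \<alpha> u \<le> (p - 1) + 2 * \<bar>\<alpha>\<bar>"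
proof -
  have K0: "Kc p \<alpha> \<ge> 0" using Kc_nonneg[OF p] .
  have "4 * \<bar>\<alpha>\<bar> / (p - 1) \<ge> 0" using p by simp
  then have L1: "Lf u \<ge> 1" using L K0 unfolding L0_def by linarith
  have L2: "Lf u \<ge> 4 * \<bar>\<alpha>\<bar> / (p - 1)" using L K0 unfolding L0_def by simp
  have "\<bar>2 * \<alpha> / Lf u\<bar> = 2 * \<bar>\<alpha>\<bar> / Lf u" using L1 by (simp add: abs_mult)
  also have "\<dots> \<le> (p - 1) / 2"
  proof -
    have "4 * \<bar>\<alpha>\<bar> \<le> Lf u * (p - 1)" using L2 p by (simp add: divide_le_eq)
    then show ?thesis using L1 by (simp add: divide_le_eq field_simps)
  qed
  finally have a: "\<bar>2 * \<alpha> / Lf u\<bar> \<le> (p - 1) / 2" .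
  have b: "\<bar>2 * \<alpha> / Lf u\<bar> \<le> 2 * \<bar>\<alpha>\<bar>"
  proof -
    have "2 * \<bar>\<alpha>\<bar> / Lf u \<le> 2 * \<bar>\<alpha>\<bar> / 1" using L1 by (intro divide_left_mono) auto
    then show ?thesis using L1 by (simp add: abs_mult)
  qed
  show "gt p \<alpha> u \<ge> (p - 1) / 2" using abs_le_D2[OF a] unfolding gt_def by (simp add: diff_divide_distrib)
  show "gt p \<alpha> u \<le> (p - 1) + 2 * \<bar>\<alpha>\<bar>" using abs_le_D1[OF b] unfolding gt_def by simp
qed

lemma Rf_bound:
  assumes p: "p > 1" and L: "Lf u \<ge> L0 p \<alpha>"
  shows "\<bar>Rf p \<alpha> u\<bar> \<le> Kc p \<alpha> / (Lf u)\<^sup>2"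
proof -
  define g where "g = gt p \<alpha> u"
  define Lu where "Lu = Lf u"
  define q where "q = u\<^sup>2 + 2"
  have K0: "Kc p \<alpha> \<ge> 0" using Kc_nonneg[OF p] .
  have "4 * \<bar>\<alpha>\<bar> / (p - 1) \<ge> 0" using p by simp
  then have L1: "Lu \<ge> 1" using L K0 unfolding L0_def Lu_def by linarith
  have g1: "g \<ge> (p - 1) / 2" unfolding g_def using gt_bounds(1)[OF p L] .
  have gp: "(p - 1) / 2 > 0" using p by simp
  have qL: "Lu \<le> q" unfolding q_def Lu_def by (rule Lf_le)
  have qp: "q > 0" unfolding q_def by simp
  have T1: "\<bar>4 * \<alpha> / (q * Lu * g)\<bar> \<le> 8 * \<bar>\<alpha>\<bar> / (p - 1) / Lu\<^sup>2"
  proof -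
    have "\<bar>4 * \<alpha> / (q * Lu * g)\<bar> = 4 * \<bar>\<alpha>\<bar> / (q * Lu * g)" using qp L1 g1 gp by (simp add: abs_mult)
    also have "\<dots> \<le> 4 * \<bar>\<alpha>\<bar> / (Lu * Lu * ((p - 1) / 2))"
    proof (rule frac_le)
      show "Lu * Lu * ((p - 1) / 2) \<le> q * Lu * g" using qL L1 g1 gp
        by (intro mult_mono) auto
    qed (use L1 gp in auto)
    also have "\<dots> = 8 * \<bar>\<alpha>\<bar> / (p - 1) / Lu\<^sup>2" using p by (simp add: power2_eq_square field_simps)
    finally show ?thesis .
  qed
  have T2: "\<bar>2 * \<alpha> * (2 * u\<^sup>2 / q) / (Lu\<^sup>2 * g\<^sup>2)\<bar> \<le> 16 * \<bar>\<alpha>\<bar> / (p - 1)\<^sup>2 / Lu\<^sup>2"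
  proof -
    have m: "0 \<le> 2 * u\<^sup>2 / q" "2 * u\<^sup>2 / q \<le> 2" using qp unfolding q_def by (auto simp: divide_le_eq)
    have "\<bar>2 * \<alpha> * (2 * u\<^sup>2 / q)\<bar> \<le> 4 * \<bar>\<alpha>\<bar>" 
    proof -
      have "\<bar>2 * \<alpha> * (2 * u\<^sup>2 / q)\<bar> = 2 * \<bar>\<alpha>\<bar> * (2 * u\<^sup>2 / q)" using m qp by (simp add: abs_mult)
      also have "\<dots> \<le> 2 * \<bar>\<alpha>\<bar> * 2" using m by (intro mult_left_mono) auto
      finally show ?thesis by simp
    qed
    have "\<bar>2 * \<alpha> * (2 * u\<^sup>2 / q) / (Lu\<^sup>2 * g\<^sup>2)\<bar> = \<bar>2 * \<alpha> * (2 * u\<^sup>2 / q)\<bar> / (Lu\<^sup>2 * g\<^sup>2)"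
      by (simp add: abs_mult)
    also have "\<dots> \<le> 4 * \<bar>\<alpha>\<bar> / (Lu\<^sup>2 * ((p - 1) / 2)\<^sup>2)"
    proof (rule frac_le)
      show "\<bar>2 * \<alpha> * (2 * u\<^sup>2 / q)\<bar> \<le> 4 * \<bar>\<alpha>\<bar>" by fact
      show "Lu\<^sup>2 * ((p - 1) / 2)\<^sup>2 \<le> Lu\<^sup>2 * g\<^sup>2" using g1 gp by (intro mult_left_mono power_mono) auto
    qed (use L1 gp in auto)
    also have "\<dots> = 16 * \<bar>\<alpha>\<bar> / (p - 1)\<^sup>2 / Lu\<^sup>2" using p by (simp add: power2_eq_square field_simps)
    finally show ?thesis .
  qed
  have eqR: "Rf p \<alpha> u = 4 * \<alpha> / (q * Lu * g) + 2 * \<alpha> * (2 * u\<^sup>2 / q) / (Lu\<^sup>2 * g\<^sup>2)"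
    unfolding Rf_def q_def Lu_def g_def ..
  have "\<bar>Rf p \<alpha> u\<bar> \<le> 8 * \<bar>\<alpha>\<bar> / (p - 1) / Lu\<^sup>2 + 16 * \<bar>\<alpha>\<bar> / (p - 1)\<^sup>2 / Lu\<^sup>2"
    unfolding eqR using T1 T2 abs_triangle_ineq[of "4 * \<alpha> / (q * Lu * g)" "2 * \<alpha> * (2 * u\<^sup>2 / q) / (Lu\<^sup>2 * g\<^sup>2)"] by linarith
  also have "\<dots> = Kc p \<alpha> / Lu\<^sup>2" unfolding Kc_def by (simp add: add_divide_distrib)
  finally show ?thesis unfolding Lu_def .
qed

lemma ln3_bound:
  fixes c v :: real
  assumes c: "c > 0" and v: "v \<ge> 3 / c\<^sup>2"
  shows "ln (3 * v) \<le> 2 * c * v"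
proof -
  have c2: "c\<^sup>2 > 0" using c by simp
  have vp: "v > 0" using v c2 by (smt (verit) divide_pos_pos)
  have "3 \<le> c\<^sup>2 * v" using v c2 by (simp add: divide_le_eq mult.commute)
  then have "3 * v \<le> c\<^sup>2 * v * v" using vp by (intro mult_right_mono) auto
  then have "3 * v \<le> (c * v)\<^sup>2" by (simp add: power2_eq_square algebra_simps)
  then have sq: "sqrt (3 * v) \<le> c * v" using c vp
    by (metis real_sqrt_le_mono real_sqrt_abs abs_of_pos mult_pos_pos)
  have "ln (3 * v) = 2 * ln (sqrt (3 * v))" using vp by (simp add: ln_sqrt)
  also have "\<dots> \<le> 2 * (sqrt (3 * v) - 1)" using vp by (intro mult_left_mono ln_le_minus_one) auto
  also have "\<dots> \<le> 2 * (c * v)" using sq by simp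
  finally show ?thesis by simp
qed

lemma Lf_at_top: "filterlim Lf at_top at_top"
proof (rule filterlim_at_top_mono[OF ln_at_top])
  show "\<forall>\<^sub>F x in at_top. ln x \<le> Lf x"
    using eventually_ge_at_top[of "1::real"] by eventually_elim (rule Lf_ge_ln)
qed

lemma Lf_le_3ln: assumes "u \<ge> 2" shows "Lf u \<le> 3 * ln u"
proof -
  have u0: "u > 0" using assms by simp
  have u4: "u\<^sup>2 \<ge> 4" using power_mono[of 2 u 2] assms by simp
  have "Lf u \<le> ln (2 * u\<^sup>2)" unfolding Lf_def using u4 by (subst ln_le_cancel_iff) auto
  also have "\<dots> = ln 2 + 2 * ln u" using u0 by (simp add: ln_mult ln_realpow)
  also have "\<dots> \<le> 3 * ln u" using assms by simp
  finally show ?thesis .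
qed

lemma E_le:
  assumes p: "p > 1" and u: "u \<ge> 2" and uU: "u \<ge> exp (3 / ((p - 1) / (4 * (\<bar>\<alpha>\<bar> + 1)))\<^sup>2)"
  shows "u powr (1 - p) * Lf u powr (- \<alpha>) \<le> u powr ((1 - p) / 2)"
proof -
  define c where "c = (p - 1) / (4 * (\<bar>\<alpha>\<bar> + 1))"
  have c0: "c > 0" unfolding c_def using p by (simp add: add_pos_nonneg)
  have u0: "u > 0" using u by simp
  define v where "v = ln u"
  have vU: "v \<ge> 3 / c\<^sup>2" unfolding v_def c_def using uU u0 by (simp add: ln_ge_iff)
  have L1: "Lf u > 1" using Lf_gt1[OF u] .
  have lnL0: "ln (Lf u) \<ge> 0" using L1 by simp
  have "ln (Lf u) \<le> ln (3 * v)" unfolding v_def using Lf_le_3ln[OF u] L1 by (subst ln_le_cancel_iff) auto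
  also have "\<dots> \<le> 2 * c * v" using ln3_bound[OF c0 vU] .
  finally have lnL: "ln (Lf u) \<le> 2 * c * v" .
  have v0: "v \<ge> 0" unfolding v_def using u by simp
  have "\<bar>\<alpha>\<bar> * ln (Lf u) \<le> \<bar>\<alpha>\<bar> * (2 * c * v)" using lnL by (intro mult_left_mono) auto
  also have "\<dots> = (p - 1) / 2 * v * (\<bar>\<alpha>\<bar> / (\<bar>\<alpha>\<bar> + 1))" unfolding c_def by (simp add: field_simps)
  also have "\<dots> \<le> (p - 1) / 2 * v * 1" using p v0 by (intro mult_left_mono) auto
  finally have key: "\<bar>\<alpha>\<bar> * ln (Lf u) \<le> (p - 1) / 2 * v" by simp
  have "- \<alpha> * ln (Lf u) \<le> \<bar>\<alpha>\<bar> * ln (Lf u)" using lnL0 by (intro mult_right_mono) auto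
  then have "- \<alpha> * ln (Lf u) \<le> (p - 1) / 2 * ln u" using key unfolding v_def by linarith
  then have "Lf u powr (- \<alpha>) \<le> u powr ((p - 1) / 2)"
    using L1 u0 by (simp add: powr_def)
  then have "u powr (1 - p) * Lf u powr (- \<alpha>) \<le> u powr (1 - p) * u powr ((p - 1) / 2)"
    by (intro mult_left_mono) auto
  also have "\<dots> = u powr ((1 - p) / 2)" by (simp add: powr_add[symmetric] field_simps)
  finally show ?thesis .
qed

lemma Phi0_lim:
  assumes p: "p > 1"
  shows "(Phi0 p \<alpha> \<longlongrightarrow> 0) at_top"
proof -
  have gl: "(gt p \<alpha> \<longlongrightarrow> (p - 1) + 0) at_top"
    unfolding gt_def[abs_def]
    by (intro tendsto_add tendsto_const tendsto_divide_0[OF tendsto_const] filterlim_at_top_imp_at_infinity Lf_at_top)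
  have pow0: "((\<lambda>u. u powr ((1 - p) / 2)) \<longlongrightarrow> 0) at_top"
    using p by (intro tendsto_neg_powr filterlim_ident) auto
  have El: "((\<lambda>u. u powr (1 - p) * Lf u powr (- \<alpha>)) \<longlongrightarrow> 0) at_top"
  proof (rule tendsto_sandwich[OF _ _ tendsto_const pow0])
    show "\<forall>\<^sub>F u in at_top. 0 \<le> u powr (1 - p) * Lf u powr (- \<alpha>)" by simp
    show "\<forall>\<^sub>F u in at_top. u powr (1 - p) * Lf u powr (- \<alpha>) \<le> u powr ((1 - p) / 2)"
      using eventually_ge_at_top[of "max 2 (exp (3 / ((p - 1) / (4 * (\<bar>\<alpha>\<bar> + 1)))\<^sup>2))"]
      by eventually_elim (rule E_le[OF p], auto)
  qed
  have "((\<lambda>u. u powr (1 - p) * Lf u powr (- \<alpha>) / gt p \<alpha> u) \<longlongrightarrow> 0 / ((p - 1) + 0)) at_top"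
    using p by (intro tendsto_divide El gl) auto
  then show ?thesis unfolding Phi0_def[abs_def] by simp
qed

definition X0 :: "real \<Rightarrow> real \<Rightarrow> real" where "X0 p \<alpha> = max 2 (exp (L0 p \<alpha>))"

lemma X0_good: assumes "u \<ge> X0 p \<alpha>" shows "u \<ge> 2" "Lf u \<ge> L0 p \<alpha>"
proof -
  show u2: "u \<ge> 2" using assms unfolding X0_def by simp
  have "exp (L0 p \<alpha>) \<le> u" using assms unfolding X0_def by simp
  then have "L0 p \<alpha> \<le> ln u" using u2 by (simp add: ln_ge_iff)
  also have "\<dots> \<le> Lf u" using Lf_ge_ln u2 by simp
  finally show "Lf u \<ge> L0 p \<alpha>" .
qed

lemma ode_main:
  fixes \<psi> :: "real \<Rightarrow> real" and T p \<alpha> :: real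
  assumes p: "p > 1"
    and pos: "\<forall>t<T. \<psi> t > 0"
    and ode: "\<forall>t<T. (\<psi> has_real_derivative (\<psi> t powr p * ln ((\<psi> t)\<^sup>2 + 2) powr \<alpha>)) (at t)"
    and blowup: "filterlim \<psi> at_top (at_left T)"
  shows "\<exists>b<T. \<forall>t. b < t \<and> t < T \<longrightarrow> \<psi> t \<ge> X0 p \<alpha> \<and>
     \<bar>(T - t) - Phi0 p \<alpha> (\<psi> t)\<bar> \<le> Kc p \<alpha> / (Lf (\<psi> t))\<^sup>2 * (T - t)"
proof -
  have "eventually (\<lambda>t. X0 p \<alpha> \<le> \<psi> t) (at_left T)" using blowup unfolding filterlim_at_top by blast
  then obtain b where b: "b < T" and bP: "\<And>y. b < y \<Longrightarrow> y < T \<Longrightarrow> X0 p \<alpha> \<le> \<psi> y"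
    unfolding eventually_at_left_field by blast
  have ode': "\<And>t. t < T \<Longrightarrow> (\<psi> has_real_derivative (\<psi> t powr p * Lf (\<psi> t) powr \<alpha>)) (at t)"
    using ode unfolding Lf_def by simp
  have dpos: "\<And>t. t < T \<Longrightarrow> \<psi> t powr p * Lf (\<psi> t) powr \<alpha> > 0"
  proof -
    fix t assume "t < T"
    then have "\<psi> t > 0" using pos by simp
    then show "\<psi> t powr p * Lf (\<psi> t) powr \<alpha> > 0" using Lf_pos[of "\<psi> t"] by (intro mult_pos_pos) auto
  qed
  have mono: "\<And>a c. a \<le> c \<Longrightarrow> c < T \<Longrightarrow> \<psi> a \<le> \<psi> c"
  proof -
    fix a c assume ac: "a \<le> c" "c < T"
    show "\<psi> a \<le> \<psi> c"
    proof (rule DERIV_nonneg_imp_nondecreasing[OF ac(1)])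
      fix x assume "a \<le> x" "x \<le> c"
      then have "x < T" using ac by simp
      then show "\<exists>y. (\<psi> has_real_derivative y) (at x) \<and> y \<ge> 0" using ode' dpos by (meson less_imp_le)
    qed
  qed
  define D where "D = (\<lambda>\<tau>. (T - \<tau>) - Phi0 p \<alpha> (\<psi> \<tau>))"
  have Dder: "\<And>\<tau>. b < \<tau> \<Longrightarrow> \<tau> < T \<Longrightarrow> (D has_real_derivative - Rf p \<alpha> (\<psi> \<tau>)) (at \<tau>)"
  proof -
    fix \<tau> assume t: "b < \<tau>" "\<tau> < T"
    have X: "\<psi> \<tau> \<ge> X0 p \<alpha>" using bP t by simp
    have gpos: "gt p \<alpha> (\<psi> \<tau>) > 0" using less_le_trans[OF _ gt_bounds(1)[OF p X0_good(2)[OF X]]] p by simp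
    have d1: "((\<lambda>\<tau>. Phi0 p \<alpha> (\<psi> \<tau>)) has_real_derivative
        (-1 + Rf p \<alpha> (\<psi> \<tau>)) / (\<psi> \<tau> powr p * Lf (\<psi> \<tau>) powr \<alpha>) * (\<psi> \<tau> powr p * Lf (\<psi> \<tau>) powr \<alpha>)) (at \<tau>)"
      by (rule DERIV_chain2[OF Phi0_deriv ode'[OF t(2)]]) (use pos t gpos in auto)
    have d1': "((\<lambda>\<tau>. Phi0 p \<alpha> (\<psi> \<tau>)) has_real_derivative -1 + Rf p \<alpha> (\<psi> \<tau>)) (at \<tau>)"
    proof -
      have gen: "\<And>Y X::real. Y \<noteq> 0 \<Longrightarrow> X / Y * Y = X" by simp
      have "\<psi> \<tau> powr p * Lf (\<psi> \<tau>) powr \<alpha> \<noteq> 0" using dpos[OF t(2)] by linarith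
      from gen[OF this] d1 show ?thesis by metis
    qed
    have "((\<lambda>\<tau>. (T - \<tau>) - Phi0 p \<alpha> (\<psi> \<tau>)) has_real_derivative (0 - 1) - (-1 + Rf p \<alpha> (\<psi> \<tau>))) (at \<tau>)"
      by (intro DERIV_diff d1' DERIV_const DERIV_ident)
    then show "(D has_real_derivative - Rf p \<alpha> (\<psi> \<tau>)) (at \<tau>)" unfolding D_def by simp
  qed
  have Dlim: "(D \<longlongrightarrow> 0) (at_left T)"
  proof -
    have B: "((\<lambda>\<tau>. Phi0 p \<alpha> (\<psi> \<tau>)) \<longlongrightarrow> 0) (at_left T)"
      by (rule filterlim_compose[OF Phi0_lim[OF p] blowup])
    have A: "((\<lambda>\<tau>. T - \<tau>) \<longlongrightarrow> T - T) (at_left T)"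
      by (intro tendsto_diff tendsto_const tendsto_ident_at)
    have "((\<lambda>\<tau>. (T - \<tau>) - Phi0 p \<alpha> (\<psi> \<tau>)) \<longlongrightarrow> (T - T) - 0) (at_left T)"
      by (rule tendsto_diff[OF A B])
    then show ?thesis unfolding D_def by simp
  qed
  have main: "\<bar>D t\<bar> \<le> Kc p \<alpha> / (Lf (\<psi> t))\<^sup>2 * (T - t)" if t: "b < t" "t < T" for t
  proof -
    define c where "c = Kc p \<alpha> / (Lf (\<psi> t))\<^sup>2"
    have Rb: "\<bar>Rf p \<alpha> (\<psi> z)\<bar> \<le> c" if z: "t \<le> z" "z < T" for z
    proof -
      have Xz: "\<psi> z \<ge> X0 p \<alpha>" using bP z t by simp
      have Xt: "\<psi> t \<ge> X0 p \<alpha>" using bP t by simp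
      have "\<psi> t \<le> \<psi> z" using mono z by simp
      then have Lm: "Lf (\<psi> t) \<le> Lf (\<psi> z)" using Lf_mono Xt X0_good(1)[OF Xt] by simp
      have "\<bar>Rf p \<alpha> (\<psi> z)\<bar> \<le> Kc p \<alpha> / (Lf (\<psi> z))\<^sup>2" using Rf_bound[OF p X0_good(2)[OF Xz]] .
      also have "\<dots> \<le> c" unfolding c_def using Kc_nonneg[OF p] Lm Lf_pos[of "\<psi> t"]
        by (intro divide_left_mono power_mono mult_pos_pos) auto
      finally show ?thesis .
    qed
    have lip: "\<bar>D \<tau> - D t\<bar> - c * (\<tau> - t) \<le> 0" if tau: "t < \<tau>" "\<tau> < T" for \<tau>
    proof -
      obtain z where z: "t < z" "z < \<tau>" and eq: "D \<tau> - D t = (\<tau> - t) * (- Rf p \<alpha> (\<psi> z))"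
        using MVT2[OF tau(1), of D "\<lambda>z. - Rf p \<alpha> (\<psi> z)"] Dder t tau by force
      have "\<bar>D \<tau> - D t\<bar> = (\<tau> - t) * \<bar>Rf p \<alpha> (\<psi> z)\<bar>" using eq tau by (simp add: abs_mult)
      also have "\<dots> \<le> (\<tau> - t) * c" using Rb[of z] z tau by (intro mult_left_mono) auto
      finally show ?thesis by (simp add: mult.commute)
    qed
    have lim: "((\<lambda>\<tau>. \<bar>D \<tau> - D t\<bar> - c * (\<tau> - t)) \<longlongrightarrow> \<bar>0 - D t\<bar> - c * (T - t)) (at_left T)"
      by (intro tendsto_diff tendsto_rabs tendsto_mult tendsto_const Dlim tendsto_ident_at)
    have ev: "eventually (\<lambda>\<tau>. \<bar>D \<tau> - D t\<bar> - c * (\<tau> - t) \<le> 0) (at_left T)"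
      using eventually_at_left_real[OF t(2)] by eventually_elim (use lip in auto)
    have "\<bar>0 - D t\<bar> - c * (T - t) \<le> 0"
      by (rule tendsto_upperbound[OF lim ev]) simp
    then show ?thesis unfolding c_def by simp
  qed
  show ?thesis using b bP main unfolding D_def by blast
qed

lemma h_bounds:
  fixes x \<tau> p \<alpha> :: real
  assumes p: "p > 1" and X: "x \<ge> X0 p \<alpha>" and tau: "\<tau> > 0"
    and close: "\<bar>\<tau> - Phi0 p \<alpha> x\<bar> \<le> Kc p \<alpha> / (Lf x)\<^sup>2 * \<tau>"
  defines "h \<equiv> \<tau> * x powr (p - 1) * Lf x powr \<alpha>"
  shows "\<bar>h * gt p \<alpha> x - 1\<bar> \<le> (2 * Kc p \<alpha>) * (1 / Lf x)\<^sup>2"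
    and "0 \<le> h" and "h \<le> 4 / (p - 1)"
    and "- ln \<tau> \<le> (2 * p - 1 + 3 * \<bar>\<alpha>\<bar>) * Lf x"
proof -
  have x2: "x \<ge> 2" and LL: "Lf x \<ge> L0 p \<alpha>" using X0_good[OF X] by auto
  have x0: "x > 0" using x2 by simp
  define L where "L = Lf x"
  define G where "G = gt p \<alpha> x"
  define c where "c = Kc p \<alpha> / L\<^sup>2"
  have K0: "Kc p \<alpha> \<ge> 0" using Kc_nonneg[OF p] .
  have "4 * \<bar>\<alpha>\<bar> / (p - 1) \<ge> 0" using p by simp
  then have L1: "L \<ge> 2 * Kc p \<alpha> + 1" using LL K0 unfolding L0_def L_def by linarith
  have Lp: "L \<ge> 1" using L1 K0 by linarith
  have G1: "G \<ge> (p - 1) / 2" unfolding G_def using gt_bounds(1)[OF p LL] .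
  have G2: "G \<le> (p - 1) + 2 * \<bar>\<alpha>\<bar>" unfolding G_def using gt_bounds(2)[OF p LL] .
  have Gp: "G > 0" using less_le_trans[OF _ G1] p by simp
  have c2: "c \<le> 1 / 2"
  proof -
    have "L \<le> L\<^sup>2" using Lp by (simp add: power2_eq_square)
    then have "2 * Kc p \<alpha> \<le> L\<^sup>2" using L1 by linarith
    then show ?thesis unfolding c_def using Lp by (simp add: divide_le_eq)
  qed
  have c0: "c \<ge> 0" unfolding c_def using K0 by simp
  define Phi where "Phi = Phi0 p \<alpha> x"
  have PhiE: "Phi = x powr (1 - p) * L powr (- \<alpha>) / G" unfolding Phi_def Phi0_def L_def G_def ..
  have Phip: "Phi > 0" unfolding PhiE using x0 Lp Gp by simp
  have hG: "h * G = \<tau> / Phi"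
  proof -
    have "x powr (p - 1) * x powr (1 - p) = 1" using x0 by (simp add: powr_add[symmetric])
    moreover have "L powr \<alpha> * L powr (- \<alpha>) = 1" using Lp by (simp add: powr_add[symmetric])
    ultimately show ?thesis unfolding h_def PhiE L_def[symmetric] using Gp x0 Lp
      by (simp add: field_simps)
  qed
  have cl: "\<bar>\<tau> - Phi\<bar> \<le> c * \<tau>" using close unfolding Phi_def c_def L_def .
  have hG_eq: "h * G - 1 = (\<tau> - Phi) / Phi" unfolding hG using Phip by (simp add: field_simps)
  have a1: "\<bar>h * G - 1\<bar> \<le> c * (h * G)"
  proof -
    have "\<bar>h * G - 1\<bar> = \<bar>\<tau> - Phi\<bar> / Phi" using hG_eq Phip by simp
    also have "\<dots> \<le> c * \<tau> / Phi" using cl Phip by (intro divide_right_mono) auto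
    also have "\<dots> = c * (h * G)" unfolding hG by simp
    finally show ?thesis .
  qed
  have hG0: "h * G \<ge> 0" unfolding hG using tau Phip by simp
  have hG2: "h * G \<le> 2"
  proof -
    have "h * G - 1 \<le> c * (h * G)" using a1 by linarith
    moreover have "c * (h * G) \<le> 1 / 2 * (h * G)" using c2 hG0 by (intro mult_right_mono) auto
    ultimately show ?thesis by linarith
  qed
  have "\<bar>h * G - 1\<bar> \<le> c * 2" using a1 mult_left_mono[OF hG2 c0] by linarith
  then show "\<bar>h * gt p \<alpha> x - 1\<bar> \<le> (2 * Kc p \<alpha>) * (1 / Lf x)\<^sup>2"
    unfolding G_def c_def L_def by (simp add: power2_eq_square field_simps)
  show h0: "0 \<le> h" unfolding h_def using tau by simp
  have "h = (h * G) / G" using Gp by simp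
  also have "\<dots> \<le> 2 / G" using hG2 Gp by (intro divide_right_mono) auto
  also have "\<dots> \<le> 2 / ((p - 1) / 2)" using G1 p by (intro divide_left_mono) auto
  finally show "h \<le> 4 / (p - 1)" by simp
    have tl: "\<tau> \<ge> 2 / 3 * Phi"
  proof -
    have "Phi - \<tau> \<le> c * \<tau>" using cl by linarith
    moreover have "c * \<tau> \<le> 1 / 2 * \<tau>" using c2 tau by (intro mult_right_mono) auto
    ultimately show ?thesis by linarith
  qed
  have "ln (2 / 3 * Phi) \<le> ln \<tau>" using tl Phip tau by (subst ln_le_cancel_iff) auto
  moreover have "ln (2 / 3 * Phi) = ln (2 / 3) + ((1 - p) * ln x + (- \<alpha>) * ln L - ln G)"
  proof -
    have a: "x powr (1 - p) > 0" "L powr (- \<alpha>) > 0" using x0 Lp by auto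
    have "ln (2 / 3 * Phi) = ln (2 / 3) + ln Phi" using Phip by (intro ln_mult_pos) auto
    moreover have "ln Phi = ln (x powr (1 - p) * L powr (- \<alpha>)) - ln G"
      unfolding PhiE using a Gp by (simp add: ln_divide_pos)
    moreover have "ln (x powr (1 - p) * L powr (- \<alpha>)) = (1 - p) * ln x + (- \<alpha>) * ln L"
      using a by (simp add: ln_mult_pos)
    ultimately show ?thesis by simp
  qed
  ultimately have s1: "- ln \<tau> \<le> - ln (2 / 3) + (p - 1) * ln x + \<alpha> * ln L + ln G" by (simp add: algebra_simps)
  have b1: "- ln (2 / 3) \<le> L"
  proof -
    have "ln (3 / 2 :: real) \<le> 3 / 2 - 1" by (rule ln_le_minus_one) simp
    moreover have "ln (2 / 3) + ln (3 / 2) = (0::real)" using ln_mult[of "2/3" "3/2"] by simp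
    ultimately show ?thesis using Lp by linarith
  qed
  have b2: "(p - 1) * ln x \<le> (p - 1) * L" using Lf_ge_ln x2 p unfolding L_def by (intro mult_left_mono) auto
  have lnL: "0 \<le> ln L" "ln L \<le> L" using Lp by (auto intro: ln_le_minus_one[THEN order_trans])
  have b3: "\<alpha> * ln L \<le> \<bar>\<alpha>\<bar> * L"
  proof -
    have "\<alpha> * ln L \<le> \<bar>\<alpha>\<bar> * ln L" using lnL by (intro mult_right_mono) auto
    also have "\<dots> \<le> \<bar>\<alpha>\<bar> * L" using lnL by (intro mult_left_mono) auto
    finally show ?thesis .
  qed
  have b4: "ln G \<le> ((p - 1) + 2 * \<bar>\<alpha>\<bar>) * L"
  proof -
    have "ln G \<le> G" using ln_le_minus_one[OF Gp] by linarith
    also have "\<dots> \<le> ((p - 1) + 2 * \<bar>\<alpha>\<bar>) * 1" using G2 by simp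
    also have "\<dots> \<le> ((p - 1) + 2 * \<bar>\<alpha>\<bar>) * L" using Lp p by (intro mult_left_mono) auto
    finally show ?thesis .
  qed
  have "(2 * p - 1 + 3 * \<bar>\<alpha>\<bar>) * L = L + (p - 1) * L + \<bar>\<alpha>\<bar> * L + ((p - 1) + 2 * \<bar>\<alpha>\<bar>) * L"
    by (simp add: algebra_simps)
  then show "- ln \<tau> \<le> (2 * p - 1 + 3 * \<bar>\<alpha>\<bar>) * Lf x" using s1 b1 b2 b3 b4 unfolding L_def by linarith
qed

theorem lemmaA6:
  fixes \<psi> :: "real \<Rightarrow> real" and T p \<alpha> :: real
  assumes "T > 0" and "p > 1"
    and pos: "\<forall>t<T. \<psi> t > 0"
    and ode: "\<forall>t<T. (\<psi> has_real_derivative (\<psi> t powr p * ln ((\<psi> t)\<^sup>2 + 2) powr \<alpha>)) (at t)"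
    and blowup: "filterlim \<psi> at_top (at_left T)"
  shows "\<exists>C \<delta> S. \<delta> > 0 \<and> (\<forall>w s. \<bar>w\<bar> < \<delta> \<and> s \<ge> S \<longrightarrow>
           \<bar>Nfun \<psi> T p \<alpha> w s - p * w\<^sup>2 / 2\<bar>
             \<le> C * (\<bar>w\<bar> * ln s / s\<^sup>2 + w\<^sup>2 / s + \<bar>w\<bar> ^ 3))"
proof -
  have p: "p > 1" by fact
  obtain b where b: "b < T" and bP: "\<And>t. b < t \<Longrightarrow> t < T \<Longrightarrow> \<psi> t \<ge> X0 p \<alpha> \<and>
     \<bar>(T - t) - Phi0 p \<alpha> (\<psi> t)\<bar> \<le> Kc p \<alpha> / (Lf (\<psi> t))\<^sup>2 * (T - t)"
    using ode_main[OF p pos ode blowup] by blast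
  define C3 where "C3 = 2 * p - 1 + 3 * \<bar>\<alpha>\<bar>"
  define K1 where "K1 = 2 * Kc p \<alpha>"
  define H where "H = 4 / (p - 1)"
  define KNc where "KNc = KN p \<alpha> H K1"
  define C where "C = KNc * (C3\<^sup>2 + C3 + 1)"
  define S where "S = max (exp 1) (1 - ln (T - b))"
  have C3p: "C3 > 0" unfolding C3_def using p by simp
  have main: "\<bar>Nfun \<psi> T p \<alpha> w s - p * w\<^sup>2 / 2\<bar> \<le> C * (\<bar>w\<bar> * ln s / s\<^sup>2 + w\<^sup>2 / s + \<bar>w\<bar> ^ 3)"
    if w: "\<bar>w\<bar> < 1/5" and s: "s \<ge> S" for w s
  proof -
    have se: "s \<ge> exp 1" using s unfolding S_def by simp
    have s0: "s > 0" using se by (smt (verit) exp_gt_zero)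
    have lns: "ln s \<ge> 1" using se s0 by (simp add: ln_ge_iff)
    define \<tau> where "\<tau> = exp (- s)"
    define t where "t = T - \<tau>"
    have tau0: "\<tau> > 0" unfolding \<tau>_def by simp
    have "- s < ln (T - b)" using s unfolding S_def by linarith
    then have "\<tau> < T - b" unfolding \<tau>_def using b by (metis exp_less_cancel_iff exp_ln diff_gt_0_iff_gt)
    then have tb: "b < t" "t < T" unfolding t_def using tau0 by auto
    define x where "x = psi1 \<psi> T s"
    have xt: "x = \<psi> t" unfolding x_def psi1_def t_def \<tau>_def ..
    have X: "x \<ge> X0 p \<alpha>" and cl: "\<bar>\<tau> - Phi0 p \<alpha> x\<bar> \<le> Kc p \<alpha> / (Lf x)\<^sup>2 * \<tau>"
      using bP[OF tb] unfolding xt t_def by auto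
    have x2: "x \<ge> 2" and LL: "Lf x \<ge> L0 p \<alpha>" using X0_good[OF X] by auto
    define h where "h = hfun \<psi> T p \<alpha> s"
    have h_eq: "h = \<tau> * x powr (p - 1) * Lf x powr \<alpha>"
      unfolding h_def hfun_def \<tau>_def x_def Lf_def ..
    note hb = h_bounds[OF p X tau0 cl, folded h_eq]
    define \<epsilon> where "\<epsilon> = 1 / Lf x"
    have Lp: "Lf x > 0" by (rule Lf_pos)
    have K0: "Kc p \<alpha> \<ge> 0" using Kc_nonneg[OF p] .
    have "4 * \<bar>\<alpha>\<bar> / (p - 1) \<ge> 0" using p by simp
    then have L2: "Lf x \<ge> 2 + 2 * \<bar>\<alpha>\<bar>" using LL K0 unfolding L0_def by linarith
    have epsa: "\<epsilon> \<le> 1 / (2 + 2 * \<bar>\<alpha>\<bar>)" unfolding \<epsilon>_def using L2 by (intro divide_left_mono) auto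
    have gtE: "gt p \<alpha> x = (p - 1) + 2 * \<alpha> * \<epsilon>" unfolding gt_def \<epsilon>_def by simp
    have hg: "\<bar>h * ((p - 1) + 2 * \<alpha> * \<epsilon>) - 1\<bar> \<le> K1 * \<epsilon>\<^sup>2"
      using hb(1) unfolding gtE K1_def \<epsilon>_def .
    have wb: "\<bar>w\<bar> \<le> 1/5" using w by simp
    have hH: "h \<le> H" using hb(3) unfolding H_def .
    note NB0 = N_bound[OF p x2 wb \<epsilon>_def epsa Lf_le_sq[OF x2] hb(2) hH hg]
    have NB: "\<bar>Nfun \<psi> T p \<alpha> w s - p * w\<^sup>2 / 2\<bar> \<le> KNc * (\<bar>w\<bar> * \<epsilon>\<^sup>2 + w\<^sup>2 * \<epsilon> + \<bar>w\<bar> ^ 3)"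
      using NB0 unfolding Nfun_def h_def x_def KNc_def .
    have sL: "s \<le> C3 * Lf x" using hb(4) unfolding \<tau>_def C3_def by simp
    have e0: "\<epsilon> > 0" unfolding \<epsilon>_def using Lp by simp
    have eC: "\<epsilon> \<le> C3 / s"
    proof -
      have "s / Lf x \<le> C3" using sL Lp by (simp add: divide_le_eq)
      then have "\<epsilon> * s \<le> C3" unfolding \<epsilon>_def by simp
      then show ?thesis using s0 by (simp add: le_divide_eq)
    qed
    have KN0: "KNc \<ge> 0" unfolding KNc_def KN_def H_def K1_def KB_def KB1_def CA1_def
      using p Kc_nonneg[OF p] CA_nonneg[of p] by (intro add_nonneg_nonneg mult_nonneg_nonneg) auto
    define A where "A = \<bar>w\<bar> * ln s / s\<^sup>2"
    define B where "B = w\<^sup>2 / s"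
    define X3 where "X3 = \<bar>w\<bar> ^ 3"
    have A0: "A \<ge> 0" "B \<ge> 0" "X3 \<ge> 0" unfolding A_def B_def X3_def using s0 lns se exp_ge_add_one_self[of 1] by (auto intro!: divide_nonneg_pos mult_nonneg_nonneg)
    have X1b: "\<bar>w\<bar> * \<epsilon>\<^sup>2 \<le> C3\<^sup>2 * A"
    proof -
      have "\<epsilon>\<^sup>2 \<le> (C3 / s)\<^sup>2" using eC e0 by (intro power_mono) auto
      then have "\<bar>w\<bar> * \<epsilon>\<^sup>2 \<le> \<bar>w\<bar> * (C3 / s)\<^sup>2" by (intro mult_left_mono) auto
      also have "\<dots> = C3\<^sup>2 * (\<bar>w\<bar> * 1 / s\<^sup>2)" by (simp add: power_divide)
      also have "\<dots> \<le> C3\<^sup>2 * A" unfolding A_def using lns s0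
        by (intro mult_left_mono divide_right_mono) auto
      finally show ?thesis .
    qed
    have X2b: "w\<^sup>2 * \<epsilon> \<le> C3 * B"
    proof -
      have "w\<^sup>2 * \<epsilon> \<le> w\<^sup>2 * (C3 / s)" using eC by (intro mult_left_mono) auto
      then show ?thesis unfolding B_def by (simp add: mult.commute)
    qed
    have "KNc * (\<bar>w\<bar> * \<epsilon>\<^sup>2 + w\<^sup>2 * \<epsilon> + \<bar>w\<bar> ^ 3) \<le> KNc * (C3\<^sup>2 * A + C3 * B + X3)"
      using X1b X2b KN0 unfolding X3_def by (intro mult_left_mono) auto
    also have "\<dots> \<le> KNc * ((C3\<^sup>2 + C3 + 1) * (A + B + X3))"
    proof (intro mult_left_mono KN0)
      have "C3\<^sup>2 * A + C3 * B + X3 \<le> (C3\<^sup>2 + C3 + 1) * (A + B + X3)"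
        using sum3_le[OF A0, of "C3\<^sup>2" "C3\<^sup>2 + C3 + 1" C3 1] C3p by (simp add: algebra_simps)
      then show "C3\<^sup>2 * A + C3 * B + X3 \<le> (C3\<^sup>2 + C3 + 1) * (A + B + X3)" .
    qed
    finally show ?thesis using NB unfolding C_def A_def B_def X3_def by (simp add: mult.assoc)
  qed
  show ?thesis
    by (rule exI[of _ C], rule exI[of _ "1/5"], rule exI[of _ S]) (use main in auto)
qed

end
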